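(* Let $(R,\mathcal{T})$ be an AF-equivalence relation on a compact, metrizable, zero-dimensional space $X$, the inductive limit of an ascending sequence of CEERs $\Delta_X=R_0\subset R_1\subset R_2\subset\cdots$. Let $(S,\widetilde{\mathcal{T}})$ be a CEER on $X$ which is transverse to $R$. Then there exists an ascending sequence of CEERs $\Delta_X=R'_0\subset R'_1\subset R'_2\subset\cdots$ on $X$ such that $(R,\mathcal{T})$ is the inductive limit of $(R'_n,\mathcal{T}'_n)$ and $R'_n$ is transverse to $S$ for every $n$.
   Context: An étale equivalence relation on $X$ is a countable equivalence relation $R\subset X\times X$ with a locally compact, Hausdorff, second countable topology in which the product $(x,y)\cdot(y,z)=(x,z)$ of composable pairs is continuous, the inverse is a homeomorphism, and $r(x,y)=x$ is a local homeomorphism; a CEER is a compact étale equivalence relation. An AF-equivalence relation is $R=\bigcup_nR_n$ for an ascending sequence of CEERs $\Delta_X=R_0\subset R_1\subset\cdots$ with $R_n$ open in $R_{n+1}$, equipped with the inductive limit topology ($U$ open iff $U\cap R_n$ is open in $R_n$ for all $n$). $R\times_XS=\{((x,y),(y,z)):(x,y)\in R,(y,z)\in S\}$ with the relative topology from $R\times S$; étale equivalence relations $R,S$ are transverse if $R\cap S=\Delta_X$ and there is a homeomorphism $h:R\times_XS\to S\times_XR$ with $r\circ h=r$, $s\circ h=s$, where $r((x,y),(y,z))=x$, $s((x,y),(y,z))=z$. *)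

theory Defs
  imports "HOL-Analysis.Analysis"
begin

definition rmap :: "'a \<times> 'a \<Rightarrow> 'a" where "rmap p = fst p"

definition local_homeomorphism_map :: "'b topology \<Rightarrow> 'a topology \<Rightarrow> ('b \<Rightarrow> 'a) \<Rightarrow> bool" where
  "local_homeomorphism_map T X f \<longleftrightarrow>
     f ` topspace T \<subseteq> topspace X \<and>
     (\<forall>p \<in> topspace T. \<exists>U. openin T U \<and> p \<in> U \<and> openin X (f ` U) \<and>
         homeomorphic_map (subtopology T U) (subtopology X (f ` U)) f)"

definition composable :: "('a \<times> 'a) set \<Rightarrow> (('a \<times> 'a) \<times> ('a \<times> 'a)) set" where
  "composable R = {((x,y),(y',z)). (x,y) \<in> R \<and> (y',z) \<in> R \<and> y = y'}"

definition etale_eqrel :: "'a topology \<Rightarrow> ('a \<times> 'a) set \<Rightarrow> ('a \<times> 'a) topology \<Rightarrow> bool" where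
  "etale_eqrel X R T \<longleftrightarrow>
     equiv (topspace X) R \<and>
     (\<forall>x \<in> topspace X. countable (R `` {x})) \<and>
     topspace T = R \<and>
     locally_compact_space T \<and> Hausdorff_space T \<and> second_countable T \<and>
     continuous_map (subtopology (prod_topology T T) (composable R)) T
        (\<lambda>((x,y),(y',z)). (x,z)) \<and>
     homeomorphic_map T T (\<lambda>(x,y). (y,x)) \<and>
     local_homeomorphism_map T X rmap"

definition CEER :: "'a topology \<Rightarrow> ('a \<times> 'a) set \<Rightarrow> ('a \<times> 'a) topology \<Rightarrow> bool" where
  "CEER X R T \<longleftrightarrow> etale_eqrel X R T \<and> compact_space T"

definition fibprod :: "('a \<times> 'a) set \<Rightarrow> ('a \<times> 'a) set \<Rightarrow> (('a \<times> 'a) \<times> ('a \<times> 'a)) set" where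
  "fibprod R S = {((x,y),(y',z)). (x,y) \<in> R \<and> (y',z) \<in> S \<and> y = y'}"

definition fibprod_top :: "('a \<times> 'a) set \<Rightarrow> ('a \<times> 'a) topology \<Rightarrow> ('a \<times> 'a) set
    \<Rightarrow> ('a \<times> 'a) topology \<Rightarrow> (('a \<times> 'a) \<times> ('a \<times> 'a)) topology" where
  "fibprod_top R T S T' = subtopology (prod_topology T T') (fibprod R S)"

definition transverse :: "'a topology \<Rightarrow> ('a \<times> 'a) set \<Rightarrow> ('a \<times> 'a) topology
    \<Rightarrow> ('a \<times> 'a) set \<Rightarrow> ('a \<times> 'a) topology \<Rightarrow> bool" where
  "transverse X R T S T' \<longleftrightarrow>
     R \<inter> S = Id_on (topspace X) \<and>
     (\<exists>h. homeomorphic_map (fibprod_top R T S T') (fibprod_top S T' R T) h \<and>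
          (\<forall>q \<in> fibprod R S. fst (fst (h q)) = fst (fst q) \<and> snd (snd (h q)) = snd (snd q)))"

definition AF_presentation :: "'a topology \<Rightarrow> ('a \<times> 'a) set \<Rightarrow> ('a \<times> 'a) topology
    \<Rightarrow> (nat \<Rightarrow> ('a \<times> 'a) set) \<Rightarrow> (nat \<Rightarrow> ('a \<times> 'a) topology) \<Rightarrow> bool" where
  "AF_presentation X R T Rs Ts \<longleftrightarrow>
     (\<forall>n. CEER X (Rs n) (Ts n)) \<and>
     Rs 0 = Id_on (topspace X) \<and>
     (\<forall>n. Rs n \<subseteq> Rs (Suc n) \<and> openin (Ts (Suc n)) (Rs n) \<and>
          Ts n = subtopology (Ts (Suc n)) (Rs n)) \<and>
     R = (\<Union>n. Rs n) \<and>
     topspace T = R \<and>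
     (\<forall>U. openin T U \<longleftrightarrow> U \<subseteq> R \<and> (\<forall>n. openin (Ts n) (U \<inter> Rs n)))"

end

theory Submission
  imports Defs
begin


lemma lh_cont:
  assumes "local_homeomorphism_map T X f"
  shows "continuous_map T X f"
proof -
  have img: "f ` topspace T \<subseteq> topspace X" using assms unfolding local_homeomorphism_map_def by blast
  have "openin T {x \<in> topspace T. f x \<in> V}" if V: "openin X V" for V
  proof (subst openin_subopen, intro ballI)
    fix p assume p: "p \<in> {x \<in> topspace T. f x \<in> V}"
    then obtain U where U: "openin T U" "p \<in> U" "openin X (f ` U)"
      "homeomorphic_map (subtopology T U) (subtopology X (f ` U)) f"
      using assms unfolding local_homeomorphism_map_def by blast
    have c: "continuous_map (subtopology T U) (subtopology X (f ` U)) f"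
      using U(4) homeomorphic_imp_continuous_map by blast
    have "openin (subtopology X (f ` U)) (V \<inter> f ` U)"
      using V openin_subtopology by blast
    then have "openin (subtopology T U) {x \<in> topspace (subtopology T U). f x \<in> V \<inter> f ` U}"
      using c openin_continuous_map_preimage by blast
    moreover have "{x \<in> topspace (subtopology T U). f x \<in> V \<inter> f ` U} = {x \<in> U. f x \<in> V}"
      using U(1) openin_subset by (auto simp: topspace_subtopology)
    ultimately have o: "openin T {x \<in> U. f x \<in> V}"
      using U(1) openin_trans_full by metis
    show "\<exists>W. openin T W \<and> p \<in> W \<and> W \<subseteq> {x \<in> topspace T. f x \<in> V}"
      by (rule exI[of _ "{x \<in> U. f x \<in> V}"]) (use o p U(2) openin_subset[OF U(1)] in auto)
  qed
  then show ?thesis using img unfolding continuous_map_def by blast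
qed

lemma lh_open:
  assumes "local_homeomorphism_map T X f" "openin T V"
  shows "openin X (f ` V)"
proof (subst openin_subopen, intro ballI)
  fix y assume "y \<in> f ` V"
  then obtain p where p: "p \<in> V" "y = f p" by blast
  then have "p \<in> topspace T" using assms(2) openin_subset by blast
  then obtain U where U: "openin T U" "p \<in> U" "openin X (f ` U)"
      "homeomorphic_map (subtopology T U) (subtopology X (f ` U)) f"
      using assms unfolding local_homeomorphism_map_def by blast
  have "openin (subtopology T U) (V \<inter> U)" using assms(2) openin_subtopology by blast
  moreover have "V \<inter> U \<subseteq> topspace (subtopology T U)"
    using assms(2) openin_subset by (auto simp: topspace_subtopology)
  ultimately have "openin (subtopology X (f ` U)) (f ` (V \<inter> U))"
    using U(4) homeomorphic_map_openness by blast
  then have "openin X (f ` (V \<inter> U))" using U(3) openin_trans_full by blast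
  then show "\<exists>W. openin X W \<and> y \<in> W \<and> W \<subseteq> f ` V"
    using p U(2) by blast
qed

lemma lh_restrict:
  assumes "local_homeomorphism_map T X f" "openin T W"
  shows "local_homeomorphism_map (subtopology T W) X f"
  unfolding local_homeomorphism_map_def
proof (intro conjI ballI)
  show "f ` topspace (subtopology T W) \<subseteq> topspace X"
    using assms(1) unfolding local_homeomorphism_map_def by (auto simp: topspace_subtopology)
  fix p assume p: "p \<in> topspace (subtopology T W)"
  then have pT: "p \<in> topspace T" "p \<in> W" by (auto simp: topspace_subtopology)
  then obtain U where U: "openin T U" "p \<in> U" "openin X (f ` U)"
      "homeomorphic_map (subtopology T U) (subtopology X (f ` U)) f"
      using assms unfolding local_homeomorphism_map_def by blast
  have UW: "openin T (U \<inter> W)" using U(1) assms(2) by blast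
  have lh: "local_homeomorphism_map T X f" by fact
  have "openin X (f ` (U \<inter> W))" using lh_open[OF lh UW] .
  moreover have "homeomorphic_map (subtopology T (U \<inter> W)) (subtopology X (f ` (U \<inter> W))) f"
  proof -
    have "homeomorphic_map (subtopology (subtopology T U) (U \<inter> W)) (subtopology (subtopology X (f ` U)) (f ` (U \<inter> W))) f"
      apply (rule homeomorphic_map_subtopologies[OF U(4)])
      using openin_subset[OF U(1)] openin_subset[OF U(3)] by (auto simp: topspace_subtopology)
    then show ?thesis by (simp add: subtopology_subtopology Int_absorb1 image_mono)
  qed
  moreover have "openin (subtopology T W) (U \<inter> W)" using U(1) openin_subtopology by blast
  ultimately show "\<exists>U. openin (subtopology T W) U \<and> p \<in> U \<and> openin X (f ` U) \<and>
         homeomorphic_map (subtopology (subtopology T W) U) (subtopology X (f ` U)) f"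
    using U(2) pT by (intro exI[of _ "U \<inter> W"]) (simp add: subtopology_subtopology Int_absorb1 inf_commute)
qed

lemma lh_finite_fibre:
  assumes "local_homeomorphism_map T X f" "compact_space T" "Hausdorff_space X" "y \<in> topspace X"
  shows "finite {p \<in> topspace T. f p = y}"
proof -
  let ?K = "{p \<in> topspace T. f p = y}"
  have "closedin T {p \<in> topspace T. f p \<in> {y}}"
    using closedin_continuous_map_preimage[OF lh_cont[OF assms(1)] closedin_Hausdorff_singleton[OF assms(3,4)]] .
  then have K: "compactin T ?K" using closedin_compact_space[OF assms(2)] by simp
  define \<U> where "\<U> = {U. openin T U \<and> inj_on f U}"
  have cov: "?K \<subseteq> \<Union>\<U>"
  proof
    fix p assume "p \<in> ?K"
    then obtain U where U: "openin T U" "p \<in> U"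
      "homeomorphic_map (subtopology T U) (subtopology X (f ` U)) f"
      using assms unfolding local_homeomorphism_map_def by blast
    have "inj_on f U" using homeomorphic_imp_injective_map[OF U(3)] openin_subset[OF U(1)]
      by (simp add: topspace_subtopology Int_absorb1)
    then show "p \<in> \<Union>\<U>" using U unfolding \<U>_def by blast
  qed
  obtain \<F> where F: "finite \<F>" "\<F> \<subseteq> \<U>" "?K \<subseteq> \<Union>\<F>"
    using K cov unfolding compactin_def \<U>_def by (metis (no_types, lifting) mem_Collect_eq)
  have "finite (?K \<inter> U)" if "U \<in> \<F>" for U
  proof -
    have inj: "inj_on f U" using that F(2) unfolding \<U>_def by blast
    have "?K \<inter> U \<subseteq> {x. x \<in> U \<and> f x = y}" by blast
    moreover have "finite {x. x \<in> U \<and> f x = y}"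
    proof (cases "\<exists>x\<in>U. f x = y")
      case True
      then obtain x where "x \<in> U" "f x = y" by blast
      then have "{x. x \<in> U \<and> f x = y} = {x}" using inj unfolding inj_on_def by blast
      then show ?thesis by simp
    next
      case False then have "{x. x \<in> U \<and> f x = y} = {}" by blast
      then show ?thesis by (metis finite.emptyI)
    qed
    ultimately show ?thesis using finite_subset by blast
  qed
  then have "finite (\<Union>U\<in>\<F>. ?K \<inter> U)" using F(1) by blast
  moreover have "?K = (\<Union>U\<in>\<F>. ?K \<inter> U)" using F(3) by blast
  ultimately show ?thesis by simp
qed



locale ctx =
  fixes X :: "'a topology" and R :: "('a \<times> 'a) set" and T :: "('a \<times> 'a) topology"
    and Rs :: "nat \<Rightarrow> ('a \<times> 'a) set" and Ts :: "nat \<Rightarrow> ('a \<times> 'a) topology"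
    and S :: "('a \<times> 'a) set" and TS :: "('a \<times> 'a) topology"
    and h :: "('a \<times> 'a) \<times> ('a \<times> 'a) \<Rightarrow> ('a \<times> 'a) \<times> ('a \<times> 'a)"
  assumes Haus: "Hausdorff_space X"
  and AF: "AF_presentation X R T Rs Ts"
  and CS: "CEER X S TS"
  and RS: "R \<inter> S = Id_on (topspace X)"
  and hh: "homeomorphic_map (fibprod_top R T S TS) (fibprod_top S TS R T) h"
  and hend: "\<forall>q \<in> fibprod R S. fst (fst (h q)) = fst (fst q) \<and> snd (snd (h q)) = snd (snd q)"
begin

lemma AFc: "(\<forall>n. CEER X (Rs n) (Ts n)) \<and>
     Rs 0 = Id_on (topspace X) \<and>
     (\<forall>n. Rs n \<subseteq> Rs (Suc n) \<and> openin (Ts (Suc n)) (Rs n) \<and>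
          Ts n = subtopology (Ts (Suc n)) (Rs n)) \<and>
     R = (\<Union>n. Rs n) \<and>
     topspace T = R \<and>
     (\<forall>U. openin T U \<longleftrightarrow> U \<subseteq> R \<and> (\<forall>n. openin (Ts n) (U \<inter> Rs n)))"
  using AF unfolding AF_presentation_def .
lemma CEn: "CEER X (Rs n) (Ts n)" using AFc by (elim conjE allE)
lemma Rs0: "Rs 0 = Id_on (topspace X)" using AFc by (elim conjE)
lemma Rs_Suc: "Rs n \<subseteq> Rs (Suc n)" using AFc by (elim conjE allE)
lemma Rs_open_Suc: "openin (Ts (Suc n)) (Rs n)" using AFc by (elim conjE allE)
lemma Ts_sub: "Ts n = subtopology (Ts (Suc n)) (Rs n)" using AFc by (elim conjE allE)
lemma R_Un: "R = (\<Union>n. Rs n)" using AFc by (elim conjE)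
lemma top_T: "topspace T = R" using AFc by (elim conjE)
lemma open_T: "openin T U \<longleftrightarrow> U \<subseteq> R \<and> (\<forall>n. openin (Ts n) (U \<inter> Rs n))"
  using AFc by (elim conjE allE)

lemma etn: "etale_eqrel X (Rs n) (Ts n)" using CEn unfolding CEER_def by blast
lemma top_Ts: "topspace (Ts n) = Rs n" using etn unfolding etale_eqrel_def by blast
lemma eq_Rs: "equiv (topspace X) (Rs n)" using etn unfolding etale_eqrel_def by blast
lemma etS: "etale_eqrel X S TS" using CS unfolding CEER_def by blast
lemma top_TS: "topspace TS = S" using etS unfolding etale_eqrel_def by blast
lemma eq_S: "equiv (topspace X) S" using etS unfolding etale_eqrel_def by blast

lemma Rs_inc: "incseq Rs" using Rs_Suc by (simp add: incseq_SucI)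
lemma Rs_mono: "m \<le> n \<Longrightarrow> Rs m \<subseteq> Rs n" using Rs_inc by (simp add: incseq_def)

lemma R_sub: "R \<subseteq> topspace X \<times> topspace X"
  using eq_Rs R_Un unfolding equiv_def refl_on_def by blast
lemma S_sub: "S \<subseteq> topspace X \<times> topspace X"
  using eq_S unfolding equiv_def refl_on_def by blast
lemma S_refl: "x \<in> topspace X \<Longrightarrow> (x,x) \<in> S"
  using eq_S unfolding equiv_def refl_on_def by blast
lemma S_sym: "(x,y) \<in> S \<Longrightarrow> (y,x) \<in> S"
  using eq_S unfolding equiv_def sym_def by blast
lemma S_trans: "(x,y) \<in> S \<Longrightarrow> (y,z) \<in> S \<Longrightarrow> (x,z) \<in> S"
  using eq_S unfolding equiv_def trans_def by blast
lemma Rs_refl: "x \<in> topspace X \<Longrightarrow> (x,x) \<in> Rs n"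
  using eq_Rs unfolding equiv_def refl_on_def by blast
lemma Rs_sym: "(x,y) \<in> Rs n \<Longrightarrow> (y,x) \<in> Rs n"
  using eq_Rs unfolding equiv_def sym_def by blast
lemma Rs_trans: "(x,y) \<in> Rs n \<Longrightarrow> (y,z) \<in> Rs n \<Longrightarrow> (x,z) \<in> Rs n"
  using eq_Rs unfolding equiv_def trans_def by blast
lemma R_sym: "(x,y) \<in> R \<Longrightarrow> (y,x) \<in> R"
  using R_Un Rs_sym by blast
lemma R_trans: assumes "(x,y) \<in> R" "(y,z) \<in> R" shows "(x,z) \<in> R"
proof -
  obtain m n where "(x,y) \<in> Rs m" "(y,z) \<in> Rs n" using assms R_Un by blast
  then have "(x,y) \<in> Rs (max m n)" "(y,z) \<in> Rs (max m n)" using Rs_mono by (meson max.cobounded1 max.cobounded2 subsetD)+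
  then show ?thesis using Rs_trans R_Un by blast
qed

lemma top_fp: "topspace (fibprod_top R T S TS) = fibprod R S"
  unfolding fibprod_top_def by (auto simp: topspace_subtopology top_T top_TS fibprod_def)
lemma top_fp2: "topspace (fibprod_top S TS R T) = fibprod S R"
  unfolding fibprod_top_def by (auto simp: topspace_subtopology top_T top_TS fibprod_def)

lemma h_img: "h ` fibprod R S = fibprod S R"
  using homeomorphic_imp_surjective_map[OF hh] top_fp top_fp2 by simp

lemma h_ex:
  assumes "(x,y) \<in> R" "(y,z) \<in> S"
  shows "\<exists>w. (x,w) \<in> S \<and> (w,z) \<in> R \<and> h ((x,y),(y,z)) = ((x,w),(w,z))"
proof -
  have q: "((x,y),(y,z)) \<in> fibprod R S" using assms unfolding fibprod_def by blast
  then have "h ((x,y),(y,z)) \<in> fibprod S R" using h_img by blast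
  then obtain a w w' b where hq: "h ((x,y),(y,z)) = ((a,w),(w',b))" "(a,w) \<in> S" "(w',b) \<in> R" "w = w'"
    unfolding fibprod_def by blast
  moreover have "a = x" "b = z" using hend q hq by auto
  ultimately show ?thesis by blast
qed

lemma uniq:
  assumes "(x,w) \<in> S" "(w,z) \<in> R" "(x,w') \<in> S" "(w',z) \<in> R"
  shows "w = w'"
proof -
  have "(w,w') \<in> S" using assms S_sym S_trans by blast
  moreover have "(w,w') \<in> R" using assms R_sym R_trans by blast
  ultimately have "(w,w') \<in> Id_on (topspace X)" using RS by blast
  then show ?thesis by (auto simp: Id_on_def)
qed

lemma phi_char:
  assumes "(x,y) \<in> R" "(y,z) \<in> S" "(x,w) \<in> S" "(w,z) \<in> R"
  shows "h ((x,y),(y,z)) = ((x,w),(w,z))"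
  using h_ex[OF assms(1,2)] uniq assms(3,4) by metis

definition Rp :: "nat \<Rightarrow> ('a \<times> 'a) set" where
  "Rp n = {r \<in> Rs n. \<forall>z. (snd r, z) \<in> S \<longrightarrow> snd (h (r, (snd r, z))) \<in> Rs n}"

lemma RpD: "(a,b) \<in> Rp n \<Longrightarrow> (b,z) \<in> S \<Longrightarrow> snd (h ((a,b),(b,z))) \<in> Rs n"
  by (simp add: Rp_def)
lemma RpI: "(a,b) \<in> Rs n \<Longrightarrow> (\<And>z. (b,z) \<in> S \<Longrightarrow> snd (h ((a,b),(b,z))) \<in> Rs n) \<Longrightarrow> (a,b) \<in> Rp n"
  by (simp add: Rp_def)
lemma Rp_sub: "Rp n \<subseteq> Rs n" unfolding Rp_def by (rule Collect_restrict)
lemma Rp_R: "Rp n \<subseteq> R" using Rp_sub R_Un by blast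

lemma Rp_inv:
  assumes ab: "(a,b) \<in> Rp n" and "(a,a') \<in> S" "(b,b') \<in> S" "(a',b') \<in> R"
  shows "(a',b') \<in> Rp n"
proof -
  have abR: "(a,b) \<in> R" using ab Rp_R by blast
  have "h ((a,b),(b,b')) = ((a,a'),(a',b'))" using phi_char[OF abR assms(3,2,4)] .
  then have 1: "(a',b') \<in> Rs n" using RpD[OF ab assms(3)] by simp
  have "snd (h ((a',b'), (b', c))) \<in> Rs n" if c: "(b',c) \<in> S" for c
  proof -
    obtain u where u: "(a',u) \<in> S" "(u,c) \<in> R" "h ((a',b'),(b',c)) = ((a',u),(u,c))"
      using h_ex[OF assms(4) c] by blast
    have "(b,c) \<in> S" using assms(3) c S_trans by blast
    moreover have "(a,u) \<in> S" using assms(2) u(1) S_trans by blast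
    ultimately have "h ((a,b),(b,c)) = ((a,u),(u,c))" using phi_char abR u(2) by blast
    then have "(u,c) \<in> Rs n" using RpD[OF ab \<open>(b,c) \<in> S\<close>] by simp
    then show ?thesis using u(3) by simp
  qed
  then show ?thesis using 1 by (intro RpI)
qed

lemma Rp_refl: assumes "x \<in> topspace X" shows "(x,x) \<in> Rp n"
proof -
  have "snd (h ((x,x),(x,z))) \<in> Rs n" if "(x,z) \<in> S" for z
  proof -
    have zX: "z \<in> topspace X" using that S_sub by blast
    have "(x,x) \<in> R" using Rs_refl[OF assms] R_Un by blast
    moreover have "(z,z) \<in> R" using Rs_refl[OF zX] R_Un by blast
    ultimately have "h ((x,x),(x,z)) = ((x,z),(z,z))" using phi_char that by blast
    then show ?thesis using Rs_refl[OF zX] by simp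
  qed
  then show ?thesis using Rs_refl[OF assms] by (intro RpI)
qed

lemma Rp_sym: assumes "(x,y) \<in> Rp n" shows "(y,x) \<in> Rp n"
proof -
  have xy: "(x,y) \<in> R" using assms Rp_R by blast
  then have xX: "x \<in> topspace X" "y \<in> topspace X" using R_sub by auto
  have "snd (h ((y,x),(x,z))) \<in> Rs n" if z: "(x,z) \<in> S" for z
  proof -
    obtain w where w: "(y,w) \<in> S" "(w,z) \<in> R" "h ((y,x),(x,z)) = ((y,w),(w,z))"
      using h_ex[OF R_sym[OF xy] z] by blast
    have "(z,w) \<in> Rp n" using Rp_inv[OF assms z w(1) R_sym[OF w(2)]] .
    then have "(w,z) \<in> Rs n" using Rp_sub Rs_sym by blast
    then show ?thesis using w(3) by simp
  qed
  moreover have "(y,x) \<in> Rs n" using assms Rp_sub Rs_sym by blast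
  ultimately show ?thesis by (intro RpI)
qed

lemma Rp_trans: assumes xy: "(x,y) \<in> Rp n" and yz: "(y,z) \<in> Rp n" shows "(x,z) \<in> Rp n"
proof -
  have xyR: "(x,y) \<in> R" and yzR: "(y,z) \<in> R" using xy yz Rp_R by blast+
  have "snd (h ((x,z),(z,z'))) \<in> Rs n" if z': "(z,z') \<in> S" for z'
  proof -
    obtain x' where x': "(x,x') \<in> S" "(x',z') \<in> R" "h ((x,z),(z,z')) = ((x,x'),(x',z'))"
      using h_ex[OF R_trans[OF xyR yzR] z'] by blast
    obtain y' where y': "(y,y') \<in> S" "(y',z') \<in> R" "h ((y,z),(z,z')) = ((y,y'),(y',z'))"
      using h_ex[OF yzR z'] by blast
    have 1: "(y',z') \<in> Rs n" using RpD[OF yz z'] y'(3) by simp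
    have "(x',y') \<in> R" using x'(2) y'(2) R_sym R_trans by blast
    then have "(x',y') \<in> Rp n" using Rp_inv[OF xy x'(1) y'(1)] by blast
    then have "(x',z') \<in> Rs n" using 1 Rp_sub Rs_trans by blast
    then show ?thesis using x'(3) by simp
  qed
  moreover have "(x,z) \<in> Rs n" using xy yz Rp_sub Rs_trans by blast
  ultimately show ?thesis by (intro RpI)
qed

lemma Rp_mono: "Rp n \<subseteq> Rp (Suc n)"
proof (rule subrelI)
  fix a b assume ab: "(a,b) \<in> Rp n"
  show "(a,b) \<in> Rp (Suc n)"
  proof (rule RpI)
    show "(a,b) \<in> Rs (Suc n)" using ab Rp_sub Rs_Suc by blast
    fix z assume "(b,z) \<in> S"
    then show "snd (h ((a,b),(b,z))) \<in> Rs (Suc n)" using RpD[OF ab] Rs_Suc by blast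
  qed
qed

lemma Rp0: "Rp 0 = Id_on (topspace X)"
  using Rp_sub[of 0] Rs0 Rp_refl by (auto simp: Id_on_def)

lemma Rp_equiv: "equiv (topspace X) (Rp n)"
  unfolding equiv_def refl_on_def sym_def trans_def
  using Rp_refl Rp_sym Rp_trans Rp_R R_sub by blast

lemma Rp_transv_set: "h ` fibprod (Rp n) S = fibprod S (Rp n)"
proof
  show "h ` fibprod (Rp n) S \<subseteq> fibprod S (Rp n)"
  proof
    fix p assume "p \<in> h ` fibprod (Rp n) S"
    then obtain x y z where q: "(x,y) \<in> Rp n" "(y,z) \<in> S" "p = h ((x,y),(y,z))"
      unfolding fibprod_def by blast
    obtain w where w: "(x,w) \<in> S" "(w,z) \<in> R" "p = ((x,w),(w,z))"
      using h_ex[OF subsetD[OF Rp_R q(1)] q(2)] q(3) by blast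
    have "(w,z) \<in> Rp n" using Rp_inv[OF q(1) w(1) q(2) w(2)] .
    then show "p \<in> fibprod S (Rp n)" using w unfolding fibprod_def by blast
  qed
next
  show "fibprod S (Rp n) \<subseteq> h ` fibprod (Rp n) S"
  proof
    fix p assume "p \<in> fibprod S (Rp n)"
    then obtain x w z where p: "(x,w) \<in> S" "(w,z) \<in> Rp n" "p = ((x,w),(w,z))"
      unfolding fibprod_def by blast
    then have "p \<in> fibprod S R" using Rp_R unfolding fibprod_def by blast
    then obtain q where q: "q \<in> fibprod R S" "h q = p" using h_img by (metis imageE)
    then obtain a y y' c where qq: "q = ((a,y),(y',c))" "(a,y) \<in> R" "(y',c) \<in> S" "y = y'"
      unfolding fibprod_def by blast
    have "a = x" "c = z" using hend q qq p by auto
    then have yR: "(x,y) \<in> R" and yS: "(y,z) \<in> S" using qq by auto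
    have "(x,y) \<in> Rp n" using Rp_inv[OF p(2) S_sym[OF p(1)] S_sym[OF yS] yR] .
    then show "p \<in> h ` fibprod (Rp n) S" using q qq \<open>a = x\<close> \<open>c = z\<close> yS
      unfolding fibprod_def by blast
  qed
qed


lemma finite_in_incseq:
  fixes F :: "nat \<Rightarrow> 'b set"
  assumes "finite A" "A \<subseteq> (\<Union>n. F n)" "incseq F"
  shows "\<exists>m. A \<subseteq> F m"
  using assms(1,2)
proof (induction A rule: finite_induct)
  case empty then show ?case by blast
next
  case (insert a A)
  then obtain m where m: "A \<subseteq> F m" by blast
  obtain k where k: "a \<in> F k" using insert.prems by blast
  have "F m \<subseteq> F (max m k)" "F k \<subseteq> F (max m k)" using assms(3) by (simp_all add: incseq_def)
  then show ?case using m k by blast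
qed

lemma lhS: "local_homeomorphism_map TS X rmap" using etS unfolding etale_eqrel_def by blast
lemma cptS: "compact_space TS" using CS unfolding CEER_def by blast

lemma Rp_Un: "R = (\<Union>n. Rp n)"
proof
  show "(\<Union>n. Rp n) \<subseteq> R" using Rp_R by blast
  show "R \<subseteq> (\<Union>n. Rp n)"
  proof (rule subrelI)
    fix x y assume xy: "(x,y) \<in> R"
    then have yX: "y \<in> topspace X" using R_sub by blast
    define Fy where "Fy = {p \<in> topspace TS. rmap p = y}"
    have fin: "finite Fy" unfolding Fy_def using lh_finite_fibre[OF lhS cptS Haus yX] .
    define A where "A = (\<lambda>s. snd (h ((x,y), s))) ` Fy"
    have "finite A" unfolding A_def using fin by simp
    moreover have "A \<subseteq> (\<Union>n. Rs n)"
    proof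
      fix a assume "a \<in> A"
      then obtain s where s: "s \<in> Fy" "a = snd (h ((x,y), s))" unfolding A_def by blast
      then have "s \<in> S" "fst s = y" unfolding Fy_def top_TS rmap_def by auto
      then obtain z where "s = (y,z)" "(y,z) \<in> S" by (metis prod.collapse)
      then obtain w where "(w,z) \<in> R" "a = (w,z)" using h_ex[OF xy] s(2) by force
      then show "a \<in> (\<Union>n. Rs n)" using R_Un by blast
    qed
    ultimately obtain m where m: "A \<subseteq> Rs m" using finite_in_incseq Rs_inc by blast
    obtain k where k: "(x,y) \<in> Rs k" using xy R_Un by blast
    have "(x,y) \<in> Rp (max m k)"
    proof (rule RpI)
      show "(x,y) \<in> Rs (max m k)" using k Rs_mono by (meson max.cobounded2 subsetD)
      fix z assume "(y,z) \<in> S"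
      then have "(y,z) \<in> Fy" unfolding Fy_def top_TS rmap_def by simp
      then have "snd (h ((x,y),(y,z))) \<in> Rs m" using m unfolding A_def by blast
      then show "snd (h ((x,y),(y,z))) \<in> Rs (max m k)" using Rs_mono by (meson max.cobounded1 subsetD)
    qed
    then show "(x,y) \<in> (\<Union>n. Rp n)" by blast
  qed
qed

lemma Ts_le: "m \<le> n \<Longrightarrow> Ts m = subtopology (Ts n) (Rs m)"
proof (induction n)
  case 0 then show ?case using top_Ts by (metis le_zero_eq subtopology_topspace)
next
  case (Suc n)
  show ?case
  proof (cases "m = Suc n")
    case True then show ?thesis using top_Ts by (metis subtopology_topspace)
  next
    case False
    then have "m \<le> n" using Suc.prems by simp
    then have "Ts m = subtopology (subtopology (Ts (Suc n)) (Rs n)) (Rs m)" using Suc.IH Ts_sub by metis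
    also have "\<dots> = subtopology (Ts (Suc n)) (Rs m)"
      using Rs_mono[OF \<open>m \<le> n\<close>] by (simp add: subtopology_subtopology Int_absorb1)
    finally show ?thesis .
  qed
qed

lemma open_up: "openin (Ts n) V \<Longrightarrow> n \<le> m \<Longrightarrow> openin (Ts m) V"
proof (induction m)
  case 0 then show ?case by simp
next
  case (Suc m)
  show ?case
  proof (cases "n = Suc m")
    case True then show ?thesis using Suc.prems by simp
  next
    case False
    then have "openin (Ts m) V" using Suc by simp
    then have "openin (subtopology (Ts (Suc m)) (Rs m)) V" using Ts_sub by metis
    then show ?thesis using Rs_open_Suc openin_trans_full by blast
  qed
qed

lemma Ts_open_T: assumes V: "openin (Ts n) V" shows "openin T V"
proof -
  have Vs: "V \<subseteq> Rs n" using openin_subset[OF V] top_Ts by simp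
  have "openin (Ts m) (V \<inter> Rs m)" for m
  proof (cases "n \<le> m")
    case True
    then have "V \<inter> Rs m = V" using Vs Rs_mono by blast
    then show ?thesis using open_up[OF V True] by simp
  next
    case False
    then have "Ts m = subtopology (Ts n) (Rs m)" using Ts_le by simp
    then show ?thesis using V openin_subtopology by metis
  qed
  moreover have "V \<subseteq> R" using Vs R_Un by blast
  ultimately show ?thesis using open_T by blast
qed

lemma TsT: "subtopology T (Rs n) = Ts n"
  unfolding topology_eq
proof (intro allI iffI)
  fix V assume "openin (subtopology T (Rs n)) V"
  then obtain U where "openin T U" "V = U \<inter> Rs n" using openin_subtopology by metis
  then show "openin (Ts n) V" using open_T by blast
next
  fix V assume V: "openin (Ts n) V"
  then have "V = V \<inter> Rs n" using openin_subset top_Ts by blast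
  then show "openin (subtopology T (Rs n)) V" using Ts_open_T[OF V] openin_subtopology by metis
qed

lemma Rs_open_T: "openin T (Rs n)"
  using Ts_open_T[of n "Rs n"] top_Ts by (metis openin_topspace)

lemma Rs_closed_T: "closedin T (R - Rs n)"
proof -
  have "topspace T - (R - Rs n) = Rs n" using top_T R_Un by blast
  then show ?thesis using Rs_open_T top_T unfolding closedin_def by auto
qed

lemma Rs_cmp_open_T: "openin T (R - Rs n)"
proof -
  have "openin (Ts m) ((R - Rs n) \<inter> Rs m)" for m
  proof (cases "m \<le> n")
    case True
    then have "(R - Rs n) \<inter> Rs m = {}" using Rs_mono by blast
    then show ?thesis by simp
  next
    case False
    then have le: "n \<le> m" by simp
    have "compactin (Ts m) (Rs n)"
      unfolding compactin_subspace using Ts_le[OF le] top_Ts Rs_mono[OF le] CEn[of n]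
      unfolding CEER_def by auto
    moreover have "Hausdorff_space (Ts m)" using CEn[of m] unfolding CEER_def etale_eqrel_def by blast
    ultimately have "closedin (Ts m) (Rs n)" using compactin_imp_closedin by blast
    then have "openin (Ts m) (topspace (Ts m) - Rs n)" by blast
    moreover have "topspace (Ts m) - Rs n = (R - Rs n) \<inter> Rs m" using top_Ts R_Un by blast
    ultimately show ?thesis by simp
  qed
  then show ?thesis using open_T by blast
qed


lemma fp_sub: assumes "A \<subseteq> R"
  shows "fibprod_top A (subtopology T A) S TS = subtopology (fibprod_top R T S TS) (fibprod A S)"
proof -
  have "(A \<times> topspace TS) \<inter> fibprod A S = fibprod R S \<inter> fibprod A S"
    using assms top_TS unfolding fibprod_def by auto
  then show ?thesis unfolding fibprod_top_def
    by (simp add: prod_topology_subtopology subtopology_subtopology)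
qed

lemma fp_sub2: assumes "A \<subseteq> R"
  shows "fibprod_top S TS A (subtopology T A) = subtopology (fibprod_top S TS R T) (fibprod S A)"
proof -
  have "(topspace TS \<times> A) \<inter> fibprod S A = fibprod S R \<inter> fibprod S A"
    using assms top_TS unfolding fibprod_def by auto
  then show ?thesis unfolding fibprod_top_def
    by (simp add: prod_topology_subtopology subtopology_subtopology)
qed

lemma phi_cont: "continuous_map (fibprod_top R T S TS) T (\<lambda>q. snd (h q))"
proof -
  have "continuous_map (fibprod_top S TS R T) T snd"
    unfolding fibprod_top_def by (rule continuous_map_subtopology_snd)
  then have "continuous_map (fibprod_top R T S TS) T (snd \<circ> h)"
    by (rule continuous_map_compose[OF homeomorphic_imp_continuous_map[OF hh]])
  then show ?thesis by (simp add: comp_def)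
qed

lemma snd_cont: "continuous_map (Ts n) X snd"
proof -
  have "homeomorphic_map (Ts n) (Ts n) (\<lambda>(x,y). (y,x))" "local_homeomorphism_map (Ts n) X rmap"
    using etn unfolding etale_eqrel_def by blast+
  then have "continuous_map (Ts n) X (rmap \<circ> (\<lambda>(x,y). (y,x)))"
    by (intro continuous_map_compose[OF homeomorphic_imp_continuous_map lh_cont])
  moreover have "rmap \<circ> (\<lambda>(x,y). (y,x)) = snd" by (auto simp: rmap_def fun_eq_iff)
  ultimately show ?thesis by metis
qed

lemma fst_contS: "continuous_map TS X rmap" using lh_cont[OF lhS] .

lemma Rp_clopen: "openin (Ts n) (Rp n) \<and> closedin (Ts n) (Rp n)"
proof -
  let ?F = "fibprod (Rs n) S"
  let ?FT = "fibprod_top (Rs n) (Ts n) S TS"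
  have RsR: "Rs n \<subseteq> R" using R_Un by blast
  have FT_eq: "?FT = subtopology (fibprod_top R T S TS) ?F" using fp_sub[OF RsR] TsT by simp
  have topFT: "topspace ?FT = ?F" unfolding fibprod_top_def
    by (auto simp: topspace_subtopology top_Ts top_TS fibprod_def)
  have FfR: "?F \<subseteq> fibprod R S" using RsR unfolding fibprod_def by blast
  define B where "B = {q \<in> ?F. snd (h q) \<notin> Rs n}"
  have phiR: "snd (h q) \<in> R" if "q \<in> ?F" for q
  proof -
    have "h q \<in> fibprod S R" using that FfR h_img by blast
    then show ?thesis unfolding fibprod_def by auto
  qed
  have Beq: "B = {q \<in> topspace ?FT. snd (h q) \<in> R - Rs n}"
    unfolding B_def topFT using phiR by blast
  have cont: "continuous_map ?FT T (\<lambda>q. snd (h q))"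
    using FT_eq phi_cont continuous_map_from_subtopology by metis
  have Bo: "openin ?FT B" unfolding Beq using openin_continuous_map_preimage[OF cont Rs_cmp_open_T] .
  have Bc: "closedin ?FT B" unfolding Beq using closedin_continuous_map_preimage[OF cont Rs_closed_T] .
  have Rp_eq: "Rp n = Rs n - fst ` B"
  proof (intro set_eqI iffI)
    fix r assume r: "r \<in> Rp n"
    obtain a b where ab: "r = (a,b)" by force
    have "r \<notin> fst ` B"
    proof
      assume "r \<in> fst ` B"
      then obtain s where "(r,s) \<in> B" by force
      then obtain z where "s = (b,z)" "(b,z) \<in> S" "snd (h ((a,b),(b,z))) \<notin> Rs n"
        unfolding B_def fibprod_def ab by auto
      then show False using RpD r ab by blast
    qed
    then show "r \<in> Rs n - fst ` B" using r Rp_sub by blast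
  next
    fix r assume r: "r \<in> Rs n - fst ` B"
    obtain a b where ab: "r = (a,b)" by force
    show "r \<in> Rp n" unfolding ab
    proof (rule RpI)
      show "(a,b) \<in> Rs n" using r ab by simp
      fix z assume z: "(b,z) \<in> S"
      show "snd (h ((a,b),(b,z))) \<in> Rs n"
      proof (rule ccontr)
        assume "snd (h ((a,b),(b,z))) \<notin> Rs n"
        then have "((a,b),(b,z)) \<in> B" unfolding B_def fibprod_def using r ab z by auto
        then show False using r ab by force
      qed
    qed
  qed
  have HausTs: "Hausdorff_space (Ts n)" using etn unfolding etale_eqrel_def by blast
  have cptTs: "compact_space (Ts n)" using CEn unfolding CEER_def by blast
  have Fcl: "closedin (prod_topology (Ts n) TS) ?F"
  proof -
    have "closedin (prod_topology (Ts n) TS)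
        {q \<in> topspace (prod_topology (Ts n) TS). (snd \<circ> fst) q = (rmap \<circ> snd) q}"
      by (rule closedin_continuous_maps_eq[OF Haus]
          continuous_map_compose[OF continuous_map_fst snd_cont]
          continuous_map_compose[OF continuous_map_snd fst_contS])+
    moreover have "{q \<in> topspace (prod_topology (Ts n) TS). (snd \<circ> fst) q = (rmap \<circ> snd) q} = ?F"
      by (auto simp: top_Ts top_TS fibprod_def rmap_def)
    ultimately show ?thesis by simp
  qed
  have FTc: "compact_space ?FT"
    unfolding fibprod_top_def
    by (rule compact_space_subtopology[OF closedin_compact_space[OF _ Fcl]])
       (simp add: compact_space_prod_topology cptTs cptS)
  have "compactin (Ts n) (fst ` B)"
    by (rule image_compactin[OF closedin_compact_space[OF FTc Bc]])
       (unfold fibprod_top_def, rule continuous_map_subtopology_fst)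
  then have fBc: "closedin (Ts n) (fst ` B)" using compactin_imp_closedin HausTs by blast
  have fBo: "openin (Ts n) (fst ` B)"
  proof (subst openin_subopen, intro ballI)
    fix r assume "r \<in> fst ` B"
    then obtain s where rsB: "(r,s) \<in> B" by force
    obtain W where W: "openin (prod_topology (Ts n) TS) W" "B = W \<inter> ?F"
      using Bo unfolding fibprod_top_def openin_subtopology by blast
    have "(r,s) \<in> W" using W rsB by blast
    then obtain U V where UV: "openin (Ts n) U" "openin TS V" "r \<in> U" "s \<in> V" "U \<times> V \<subseteq> W"
      using W(1) openin_prod_topology_alt by metis
    have oV: "openin X (rmap ` V)" using lh_open[OF lhS UV(2)] .
    define N where "N = {r' \<in> topspace (Ts n). snd r' \<in> rmap ` V} \<inter> U"
    have "openin (Ts n) N" unfolding N_def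
      using openin_continuous_map_preimage[OF snd_cont oV] UV(1) by blast
    moreover have "r \<in> N"
    proof -
      have "(r,s) \<in> ?F" using rsB B_def by blast
      then have "snd r = rmap s" "r \<in> Rs n" unfolding fibprod_def rmap_def by auto
      then show ?thesis unfolding N_def using UV(3,4) top_Ts by auto
    qed
    moreover have "N \<subseteq> fst ` B"
    proof
      fix r' assume "r' \<in> N"
      then obtain s' where s': "s' \<in> V" "snd r' = rmap s'" "r' \<in> U" "r' \<in> Rs n"
        unfolding N_def top_Ts by auto
      have "s' \<in> S" using s'(1) openin_subset[OF UV(2)] top_TS by blast
      then have "(r',s') \<in> ?F" using s' unfolding fibprod_def rmap_def
        by (cases r', cases s') auto
      moreover have "(r',s') \<in> W" using UV(5) s' by blast
      ultimately have "(r',s') \<in> B" using W(2) by blast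
      then show "r' \<in> fst ` B" by force
    qed
    ultimately show "\<exists>N. openin (Ts n) N \<and> r \<in> N \<and> N \<subseteq> fst ` B" by blast
  qed
  have "openin (Ts n) (Rp n)" unfolding Rp_eq using fBc top_Ts
    by (metis openin_diff openin_topspace)
  moreover have "closedin (Ts n) (Rp n)" unfolding Rp_eq using fBo top_Ts
    by (metis closedin_diff closedin_topspace)
  ultimately show ?thesis by blast
qed


lemma Tp_eq: "subtopology T (Rp n) = subtopology (Ts n) (Rp n)"
  using Rp_sub[of n] by (metis TsT subtopology_subtopology Int_absorb1)

lemma Rp_open_T: "openin T (Rp n)" using Ts_open_T Rp_clopen by blast

lemma fpR: "fibprod (Rp n) S \<subseteq> fibprod R S" using Rp_R unfolding fibprod_def by blast

lemma Rp_CEER: "CEER X (Rp n) (subtopology T (Rp n))"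
proof -
  have HausTs: "Hausdorff_space (Ts n)" using etn unfolding etale_eqrel_def by blast
  have cptTs: "compact_space (Ts n)" using CEn unfolding CEER_def by blast
  have cpt: "compact_space (subtopology (Ts n) (Rp n))"
    using compact_space_subtopology[OF closedin_compact_space[OF cptTs]] Rp_clopen by blast
  have cnt: "\<forall>x \<in> topspace X. countable (Rp n `` {x})"
  proof
    fix x assume "x \<in> topspace X"
    then have "countable (Rs n `` {x})" using etn unfolding etale_eqrel_def by blast
    moreover have "Rp n `` {x} \<subseteq> Rs n `` {x}" using Rp_sub by blast
    ultimately show "countable (Rp n `` {x})" using countable_subset by blast
  qed
  have tops: "topspace (subtopology (Ts n) (Rp n)) = Rp n"
    using Rp_sub[of n] top_Ts by (simp add: topspace_subtopology Int_absorb1)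
  have comp: "continuous_map (subtopology (prod_topology (subtopology (Ts n) (Rp n)) (subtopology (Ts n) (Rp n))) (composable (Rp n)))
      (subtopology (Ts n) (Rp n)) (\<lambda>((x,y),(y',z)). (x,z))"
  proof -
    have c: "continuous_map (subtopology (prod_topology (Ts n) (Ts n)) (composable (Rs n))) (Ts n) (\<lambda>((x,y),(y',z)). (x,z))"
      using etn unfolding etale_eqrel_def by blast
    have sub: "composable (Rp n) \<subseteq> composable (Rs n)" using Rp_sub unfolding composable_def by blast
    have src: "subtopology (prod_topology (subtopology (Ts n) (Rp n)) (subtopology (Ts n) (Rp n))) (composable (Rp n))
       = subtopology (prod_topology (Ts n) (Ts n)) (composable (Rp n))"
    proof -
      have "(Rp n \<times> Rp n) \<inter> composable (Rp n) = composable (Rp n)" unfolding composable_def by blast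
      then show ?thesis by (simp add: subtopology_Times[symmetric] subtopology_subtopology)
    qed
    have c2: "continuous_map (subtopology (prod_topology (Ts n) (Ts n)) (composable (Rp n))) (Ts n) (\<lambda>((x,y),(y',z)). (x,z))"
      using continuous_map_from_subtopology_mono[OF c sub] .
    have "(\<lambda>((x,y),(y',z)). (x,z)) \<in> topspace (subtopology (prod_topology (Ts n) (Ts n)) (composable (Rp n))) \<rightarrow> Rp n"
      using Rp_trans by (auto simp: composable_def topspace_subtopology)
    then show ?thesis unfolding src using c2 continuous_map_in_subtopology by blast
  qed
  have inv: "homeomorphic_map (subtopology (Ts n) (Rp n)) (subtopology (Ts n) (Rp n)) (\<lambda>(x,y). (y,x))"
  proof (rule homeomorphic_map_subtopologies)
    show "homeomorphic_map (Ts n) (Ts n) (\<lambda>(x,y). (y,x))" using etn unfolding etale_eqrel_def by blast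
    have "(\<lambda>(x,y). (y,x)) ` Rp n = Rp n"
    proof
      show "(\<lambda>(x,y). (y,x)) ` Rp n \<subseteq> Rp n" using Rp_sym by auto
      show "Rp n \<subseteq> (\<lambda>(x,y). (y,x)) ` Rp n"
      proof (rule subrelI)
        fix a b assume "(a,b) \<in> Rp n"
        then have "(b,a) \<in> Rp n" using Rp_sym by blast
        then show "(a,b) \<in> (\<lambda>(x,y). (y,x)) ` Rp n" by force
      qed
    qed
    then show "(\<lambda>(x,y). (y,x)) ` (topspace (Ts n) \<inter> Rp n) = topspace (Ts n) \<inter> Rp n"
      using Rp_sub[of n] top_Ts by (simp add: Int_absorb1)
  qed
  have lh: "local_homeomorphism_map (subtopology (Ts n) (Rp n)) X rmap"
    using lh_restrict etn Rp_clopen unfolding etale_eqrel_def by blast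
  show ?thesis unfolding CEER_def etale_eqrel_def Tp_eq
    using Rp_equiv cnt tops compact_imp_locally_compact_space[OF cpt]
      Hausdorff_space_subtopology[OF HausTs] second_countable_subtopology etn comp inv lh cpt
    unfolding etale_eqrel_def by blast
qed

lemma Rp_transverse: "transverse X (Rp n) (subtopology T (Rp n)) S TS"
  unfolding transverse_def
proof (intro conjI exI)
  show "Rp n \<inter> S = Id_on (topspace X)"
  proof
    show "Rp n \<inter> S \<subseteq> Id_on (topspace X)" using RS Rp_R by blast
    show "Id_on (topspace X) \<subseteq> Rp n \<inter> S" using Rp_refl S_refl by (auto simp: Id_on_def)
  qed
  have RpR: "Rp n \<subseteq> R" by (rule Rp_R)
  show "homeomorphic_map (fibprod_top (Rp n) (subtopology T (Rp n)) S TS)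
          (fibprod_top S TS (Rp n) (subtopology T (Rp n))) h"
    unfolding fp_sub[OF RpR] fp_sub2[OF RpR]
  proof (rule homeomorphic_map_subtopologies[OF hh])
    show "h ` (topspace (fibprod_top R T S TS) \<inter> fibprod (Rp n) S) =
        topspace (fibprod_top S TS R T) \<inter> fibprod S (Rp n)"
    proof -
      have "fibprod S (Rp n) \<subseteq> fibprod S R" using RpR unfolding fibprod_def by blast
      then have "fibprod S R \<inter> fibprod S (Rp n) = fibprod S (Rp n)" by blast
      moreover have "fibprod R S \<inter> fibprod (Rp n) S = fibprod (Rp n) S" using fpR[of n] by blast
      ultimately show ?thesis by (simp add: top_fp top_fp2 Rp_transv_set)
    qed
  qed
  show "\<forall>q\<in>fibprod (Rp n) S. fst (fst (h q)) = fst (fst q) \<and> snd (snd (h q)) = snd (snd q)"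
    using hend fpR by blast
qed

lemma main: "\<exists>Rs' Ts'. AF_presentation X R T Rs' Ts' \<and> (\<forall>n. transverse X (Rs' n) (Ts' n) S TS)"
proof (intro exI conjI allI)
  show "transverse X (Rp n) (subtopology T (Rp n)) S TS" for n by (rule Rp_transverse)
  have opn: "openin T U \<longleftrightarrow> U \<subseteq> R \<and> (\<forall>n. openin (subtopology T (Rp n)) (U \<inter> Rp n))" for U
  proof
    assume "openin T U"
    then show "U \<subseteq> R \<and> (\<forall>n. openin (subtopology T (Rp n)) (U \<inter> Rp n))"
      using openin_subset top_T openin_subtopology by metis
  next
    assume a: "U \<subseteq> R \<and> (\<forall>n. openin (subtopology T (Rp n)) (U \<inter> Rp n))"
    then have "openin T (U \<inter> Rp n)" for n using openin_trans_full Rp_open_T by blast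
    then have "openin T (\<Union>n. U \<inter> Rp n)" by blast
    moreover have "(\<Union>n. U \<inter> Rp n) = U" using a Rp_Un by blast
    ultimately show "openin T U" by simp
  qed
  have suc: "Rp n \<subseteq> Rp (Suc n) \<and> openin (subtopology T (Rp (Suc n))) (Rp n) \<and>
          subtopology T (Rp n) = subtopology (subtopology T (Rp (Suc n))) (Rp n)" for n
  proof -
    have m: "Rp n \<subseteq> Rp (Suc n)" by (rule Rp_mono)
    then have "Rp n = Rp n \<inter> Rp (Suc n)" by blast
    then have "openin (subtopology T (Rp (Suc n))) (Rp n)" using Rp_open_T openin_subtopology by metis
    moreover have "subtopology T (Rp n) = subtopology (subtopology T (Rp (Suc n))) (Rp n)"
      using m by (simp add: subtopology_subtopology Int_absorb1)
    ultimately show ?thesis using m by blast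
  qed
  show "AF_presentation X R T Rp (\<lambda>n. subtopology T (Rp n))"
    unfolding AF_presentation_def
    using Rp_CEER Rp0 suc Rp_Un top_T opn by blast
qed

end


theorem lemma3p5:
  fixes X :: "'a topology"
    and R :: "('a \<times> 'a) set" and T :: "('a \<times> 'a) topology"
    and Rs :: "nat \<Rightarrow> ('a \<times> 'a) set" and Ts :: "nat \<Rightarrow> ('a \<times> 'a) topology"
    and S :: "('a \<times> 'a) set" and TS :: "('a \<times> 'a) topology"
  assumes "compact_space X" and "metrizable_space X" and "X dim_le 0"
    and "AF_presentation X R T Rs Ts"
    and "CEER X S TS"
    and "transverse X R T S TS"
  shows "\<exists>Rs' Ts'. AF_presentation X R T Rs' Ts' \<and> (\<forall>n. transverse X (Rs' n) (Ts' n) S TS)"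
proof -
  obtain h where h: "homeomorphic_map (fibprod_top R T S TS) (fibprod_top S TS R T) h"
    "\<forall>q \<in> fibprod R S. fst (fst (h q)) = fst (fst q) \<and> snd (snd (h q)) = snd (snd q)"
    and RS: "R \<inter> S = Id_on (topspace X)"
    using assms(6) unfolding transverse_def by blast
  interpret ctx X R T Rs Ts S TS h
    using metrizable_imp_Hausdorff_space[OF assms(2)] assms(4,5) RS h by unfold_locales
  show ?thesis by (rule main)
qed

end
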